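(* Let $0\le\sigma<1$ and $f\colon[0,1]\to\mathbb R$ with $f_\sigma(x)=f(x)/x^\sigma$ integrable on $[0,1]$, and let $\bar f_\sigma=f_\sigma-\int_0^1f_\sigma(t)dt$. Let $(\varpi(n))_{n\ge1}$ be positive reals such that $\sum_{n\ge1}1/\varpi(n)$ converges, and put $\rho(d)=\sum_{n\ge d}1/\varpi(n)$. Assume $$\sum_{d\ge1}d^{1-2\sigma}\rho(d)\,|R_{\bar f_\sigma}(d)|<\infty.$$ Then $\sum_{n\ge1}\frac{|\Theta_{n,\sigma}(f)|}{\varpi(n)}<\infty$, where $\Theta_{n,\sigma}(f)=S_{n,\sigma}(f)-\big(\int_0^1f_\sigma(t)dt\big)\sum_{1\le\ell\le n}\ell^{1-2\sigma}$.
   Context: $S_{n,\sigma}(f)=\sum_{1\le k\le\ell\le n}\frac{1}{(k\ell)^\sigma}f\big(\frac k\ell\big)$. For a function $h$ on $(0,1]$, $R_h(d)=\frac1d\sum_{k=1}^d h(k/d)$. *)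

theory Defs
  imports "HOL-Analysis.Analysis"
begin

definition S_sum :: "nat \<Rightarrow> real \<Rightarrow> (real \<Rightarrow> real) \<Rightarrow> real" where
  "S_sum n \<sigma> f = (\<Sum>l\<in>{1..n}. \<Sum>k\<in>{1..l}.
      f (real k / real l) / (real k * real l) powr \<sigma>)"

definition R_avg :: "(real \<Rightarrow> real) \<Rightarrow> nat \<Rightarrow> real" where
  "R_avg h d = (1 / real d) * (\<Sum>k\<in>{1..d}. h (real k / real d))"

definition f_sig :: "real \<Rightarrow> (real \<Rightarrow> real) \<Rightarrow> real \<Rightarrow> real" where
  "f_sig \<sigma> f x = f x / x powr \<sigma>"

definition mean_sig :: "real \<Rightarrow> (real \<Rightarrow> real) \<Rightarrow> real" where
  "mean_sig \<sigma> f = (LINT t:{0..1}|lborel. f_sig \<sigma> f t)"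

definition fbar_sig :: "real \<Rightarrow> (real \<Rightarrow> real) \<Rightarrow> real \<Rightarrow> real" where
  "fbar_sig \<sigma> f x = f_sig \<sigma> f x - mean_sig \<sigma> f"

definition Theta :: "nat \<Rightarrow> real \<Rightarrow> (real \<Rightarrow> real) \<Rightarrow> real" where
  "Theta n \<sigma> f = S_sum n \<sigma> f - mean_sig \<sigma> f * (\<Sum>l\<in>{1..n}. real l powr (1 - 2 * \<sigma>))"

definition rho :: "(nat \<Rightarrow> real) \<Rightarrow> nat \<Rightarrow> real" where
  "rho w d = (\<Sum>i. 1 / w (i + d))"

end

theory Submission
  imports Defs
begin

lemma swap_lem:
  fixes a b :: "nat \<Rightarrow> real"
  shows "(\<Sum>n<N. (\<Sum>d\<le>n. a d) * b n) = (\<Sum>d<N. a d * (\<Sum>n\<in>{d..<N}. b n))"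
proof (induction N)
  case 0 then show ?case by simp
next
  case (Suc N)
  have "(\<Sum>d<Suc N. a d * (\<Sum>n\<in>{d..<Suc N}. b n))
      = (\<Sum>d<Suc N. a d * (\<Sum>n\<in>{d..<N}. b n) + a d * b N)"
    by (intro sum.cong refl) (auto simp: sum.atLeastLessThan_Suc distrib_left)
  also have "\<dots> = (\<Sum>d<N. a d * (\<Sum>n\<in>{d..<N}. b n)) + (\<Sum>d\<le>N. a d) * b N"
    by (simp add: sum.distrib sum_distrib_right lessThan_Suc_atMost[symmetric] distrib_right)
  finally show ?case using Suc by simp
qed

lemma alg_lem:
  fixes S T P Q R m l :: real
  assumes "P > 0" "l > 0" "S = T / P" "R = (T - l * m) / l" "Q = l / P"
  shows "S = Q * R + m * Q"
proof -
  have "Q * R + m * Q = Q * (R + m)" by (simp add: algebra_simps)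
  also have "R + m = T / l" using assms by (simp add: field_simps)
  finally show ?thesis using assms by simp
qed

lemma theta_eq:
  assumes "0 \<le> \<sigma>"
  shows "Theta (Suc n) \<sigma> f = (\<Sum>d\<le>n. real (Suc d) powr (1 - 2 * \<sigma>) * R_avg (fbar_sig \<sigma> f) (Suc d))"
proof -
  have trm: "f (real k / real l) / (real k * real l) powr \<sigma>
      = f_sig \<sigma> f (real k / real l) / real l powr (2*\<sigma>)" if "k \<ge> 1" "l \<ge> 1" for k l :: nat
  proof -
    have "real l powr (2*\<sigma>) = real l powr \<sigma> * real l powr \<sigma>"
      by (simp add: powr_add[symmetric])
    moreover have "(real k / real l) powr \<sigma> = real k powr \<sigma> / real l powr \<sigma>"
      by (simp add: powr_divide)
    moreover have "(real k * real l) powr \<sigma> = real k powr \<sigma> * real l powr \<sigma>"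
      by (simp add: powr_mult)
    moreover have "real k powr \<sigma> > 0" "real l powr \<sigma> > 0" using that by auto
    ultimately show ?thesis unfolding f_sig_def by (simp add: field_simps)
  qed
  have inner: "(\<Sum>k\<in>{1..l}. f (real k / real l) / (real k * real l) powr \<sigma>)
     = real l powr (1 - 2 * \<sigma>) * R_avg (fbar_sig \<sigma> f) l + mean_sig \<sigma> f * real l powr (1 - 2 * \<sigma>)"
    if "l \<ge> 1" for l :: nat
  proof -
    have "(\<Sum>k\<in>{1..l}. f (real k / real l) / (real k * real l) powr \<sigma>)
        = (\<Sum>k\<in>{1..l}. f_sig \<sigma> f (real k / real l)) / real l powr (2*\<sigma>)"
      using trm that by (simp add: sum_divide_distrib)
    moreover have "R_avg (fbar_sig \<sigma> f) l = ((\<Sum>k\<in>{1..l}. f_sig \<sigma> f (real k / real l)) - real l * mean_sig \<sigma> f) / real l"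
      unfolding R_avg_def fbar_sig_def by (simp add: sum_subtractf)
    moreover have "real l powr (1 - 2 * \<sigma>) = real l / real l powr (2*\<sigma>)"
      using that by (simp add: powr_diff)
    moreover have "real l > 0" "real l powr (2*\<sigma>) > 0" using that by auto
    ultimately show ?thesis
      by (intro alg_lem) auto
  qed
  have "Theta (Suc n) \<sigma> f = (\<Sum>l\<in>{1..Suc n}. real l powr (1 - 2 * \<sigma>) * R_avg (fbar_sig \<sigma> f) l)"
  proof -
    have "S_sum (Suc n) \<sigma> f = (\<Sum>l\<in>{1..Suc n}. real l powr (1 - 2 * \<sigma>) * R_avg (fbar_sig \<sigma> f) l + mean_sig \<sigma> f * real l powr (1 - 2 * \<sigma>))"
      unfolding S_sum_def by (rule sum.cong[OF refl], rule inner) simp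
    then show ?thesis unfolding Theta_def by (simp only: sum.distrib sum_distrib_left[symmetric])
  qed
  also have "\<dots> = (\<Sum>d\<le>n. real (Suc d) powr (1 - 2 * \<sigma>) * R_avg (fbar_sig \<sigma> f) (Suc d))"
    unfolding One_nat_def atMost_atLeast0 sum.atLeast_Suc_atMost_Suc_shift by (simp add: comp_def)
  finally show ?thesis .
qed

theorem proposition5p13:
  fixes \<sigma> :: real and f :: "real \<Rightarrow> real" and w :: "nat \<Rightarrow> real"
  assumes "0 \<le> \<sigma>" and "\<sigma> < 1"
    and "set_integrable lborel {0..1} (f_sig \<sigma> f)"
    and "\<And>n. n \<ge> 1 \<Longrightarrow> w n > 0"
    and "summable (\<lambda>n. 1 / w (Suc n))"
    and "summable (\<lambda>d. real (Suc d) powr (1 - 2 * \<sigma>) * rho w (Suc d)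
                          * \<bar>R_avg (fbar_sig \<sigma> f) (Suc d)\<bar>)"
  shows "summable (\<lambda>n. \<bar>Theta (Suc n) \<sigma> f\<bar> / w (Suc n))"
proof -
  define a where "a d = real (Suc d) powr (1 - 2 * \<sigma>) * \<bar>R_avg (fbar_sig \<sigma> f) (Suc d)\<bar>" for d
  define b where "b n = 1 / w (Suc n)" for n
  have bpos: "b n \<ge> 0" for n using assms(4)[of "Suc n"] by (simp add: b_def)
  have apos: "a d \<ge> 0" for d by (simp add: a_def)
  have tail: "(\<Sum>n\<in>{d..<N}. b n) \<le> rho w (Suc d)" for d N
  proof -
    have sm: "summable (\<lambda>i. 1 / w (i + Suc d))"
      using assms(5) summable_iff_shift[where k=d and f="\<lambda>n. 1 / w (Suc n)"]
      by (simp add: add.commute)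
    have "(\<Sum>n\<in>{d..<N}. b n) = (\<Sum>i<N-d. 1 / w (i + Suc d))"
      unfolding b_def
      by (rule sum.reindex_bij_witness[where j="\<lambda>n. n - d" and i="\<lambda>i. i + d"]) auto
    also have "\<dots> \<le> (\<Sum>i. 1 / w (i + Suc d))"
      by (rule sum_le_suminf[OF sm]) (auto intro: less_imp_le simp: assms(4))
    finally show ?thesis unfolding rho_def .
  qed
  have "(\<Sum>n<N. \<bar>Theta (Suc n) \<sigma> f\<bar> / w (Suc n)) \<le> (\<Sum>d. a d * rho w (Suc d))" for N
  proof -
    have "(\<Sum>n<N. \<bar>Theta (Suc n) \<sigma> f\<bar> / w (Suc n)) \<le> (\<Sum>n<N. (\<Sum>d\<le>n. a d) * b n)"
    proof (rule sum_mono)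
      fix n
      have "\<bar>Theta (Suc n) \<sigma> f\<bar> \<le> (\<Sum>d\<le>n. a d)"
        unfolding theta_eq[OF assms(1)] a_def
        by (rule order_trans[OF sum_abs]) (simp add: abs_mult)
      then show "\<bar>Theta (Suc n) \<sigma> f\<bar> / w (Suc n) \<le> (\<Sum>d\<le>n. a d) * b n"
        using bpos[of n] by (simp add: b_def divide_right_mono)
    qed
    also have "\<dots> = (\<Sum>d<N. a d * (\<Sum>n\<in>{d..<N}. b n))" by (rule swap_lem)
    also have "\<dots> \<le> (\<Sum>d<N. a d * rho w (Suc d))"
      by (rule sum_mono, rule mult_left_mono[OF tail apos])
    also have "\<dots> \<le> (\<Sum>d. a d * rho w (Suc d))"
    proof (rule sum_le_suminf)
      show "summable (\<lambda>d. a d * rho w (Suc d))"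
        using assms(6) unfolding a_def by (simp add: mult_ac)
      show "0 \<le> a m * rho w (Suc m)" if "m \<in> - {..<N}" for m
        using apos bpos by (auto intro!: mult_nonneg_nonneg
            order_trans[OF sum_nonneg tail])
    qed auto
    finally show ?thesis .
  qed
  then have "\<forall>n. (\<Sum>k\<le>n. \<bar>Theta (Suc k) \<sigma> f\<bar> / w (Suc k)) \<le> (\<Sum>d. a d * rho w (Suc d))"
    by (metis lessThan_Suc_atMost)
  then show ?thesis
    by (intro bounded_imp_summable[where B="(\<Sum>d. a d * rho w (Suc d))"])
       (auto intro!: divide_nonneg_pos assms(4))
qed

end
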